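(* Let $x$ be a real number with $x \notin \mathbb{Q}$, and let $y_1, \dots, y_k$ be real numbers such that $1, y_1, \dots, y_k$ are linearly independent over $\mathbb{Q}$. Then there exist $k-1$ numbers among $x y_1, \dots, x y_k$ such that $1$, $x$ and these $k-1$ numbers are linearly independent over $\mathbb{Q}$. *)

theory Defs
  imports "HOL-Analysis.Analysis"
begin

definition Q_lin_indep :: "real list \<Rightarrow> bool" where
  "Q_lin_indep xs \<longleftrightarrow>
     (\<forall>c :: nat \<Rightarrow> rat. (\<Sum>i<length xs. of_rat (c i) * xs ! i) = 0 \<longrightarrow> (\<forall>i<length xs. c i = 0))"

end

theory Submission
  imports Defs
begin

lemma hypA:
  fixes y :: "nat \<Rightarrow> real"
  assumes "Q_lin_indep (1 # map y [1..<k+1])"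
    and "of_rat c0 + (\<Sum>j\<in>{1..k}. of_rat (c j) * y j) = (0::real)"
  shows "c0 = 0 \<and> (\<forall>j\<in>{1..k}. c j = 0)"
proof -
  define c' where "c' i = (if i = 0 then c0 else c i)" for i
  have "(\<Sum>i<length (1 # map y [1..<k+1]). of_rat (c' i) * (1 # map y [1..<k+1]) ! i)
      = of_rat c0 + (\<Sum>i<k. of_rat (c (Suc i)) * y (Suc i))"
    apply (simp only: length_Cons length_map length_upt sum.lessThan_Suc_shift)
    apply (simp add: c'_def del: upt_Suc)
    done
  also have "\<dots> = 0"
  proof -
    have "(\<Sum>j\<in>{Suc 0..k}. of_rat (c j) * y j) = (\<Sum>i<k. of_rat (c (Suc i)) * y (Suc i))"
      by (rule sum.atLeast1_atMost_eq)
    with assms(2) show ?thesis by (simp only: One_nat_def)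
  qed
  finally have calc: "(\<Sum>i<length (1 # map y [1..<k+1]). of_rat (c' i) * (1 # map y [1..<k+1]) ! i) = 0" .
  have imp: "(\<Sum>i<length (1 # map y [1..<k+1]). of_rat (c' i) * (1 # map y [1..<k+1]) ! i) = 0 \<longrightarrow> (\<forall>i<length (1 # map y [1..<k+1]). c' i = 0)"
    using assms(1) unfolding Q_lin_indep_def by (rule spec)
  from imp calc have "\<forall>i<length (1 # map y [1..<k+1]). c' i = 0" by (rule mp)
  hence z: "\<And>i. i < k+1 \<Longrightarrow> c' i = 0" by simp
  show ?thesis
  proof
    show "c0 = 0" using z[of 0] by (simp add: c'_def)
    show "\<forall>j\<in>{1..k}. c j = 0"
    proof
      fix j assume "j \<in> {1..k}"
      hence "j < k+1" "j \<noteq> 0" by auto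
      thus "c j = 0" using z[of j] by (simp add: c'_def)
    qed
  qed
qed

lemma concl:
  fixes y :: "nat \<Rightarrow> real" and L :: "nat list"
  assumes "distinct L"
    and H: "\<And>a b d. of_rat a + of_rat b * x + (\<Sum>j\<in>set L. of_rat (d j) * x * y j) = (0::real)
       \<Longrightarrow> a = 0 \<and> b = 0 \<and> (\<forall>j\<in>set L. d j = 0)"
  shows "Q_lin_indep (1 # x # map (\<lambda>i. x * y i) L)"
  unfolding Q_lin_indep_def
proof (rule allI, rule impI)
  fix c :: "nat \<Rightarrow> rat"
  let ?n = "length L"
  assume s: "(\<Sum>i<length (1 # x # map (\<lambda>i. x * y i) L). of_rat (c i) * (1 # x # map (\<lambda>i. x * y i) L) ! i) = 0"
  define d where "d j = c (the_inv_into {..<?n} (nth L) j + 2)" for j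
  have inj: "inj_on (nth L) {..<?n}" using assms(1) by (simp add: inj_on_nth)
  have img: "nth L ` {..<?n} = set L" by (auto simp: in_set_conv_nth)
  have dL: "d (L ! i) = c (i + 2)" if "i < ?n" for i
    unfolding d_def using the_inv_into_f_f[OF inj] that by simp
  have "(\<Sum>j\<in>set L. of_rat (d j) * x * y j) = (\<Sum>i<?n. of_rat (d (L!i)) * x * y (L!i))"
    using sum.reindex[OF inj, of "\<lambda>j. of_rat (d j) * x * y j"] img by simp
  also have "\<dots> = (\<Sum>i<?n. of_rat (c (Suc (Suc i))) * (x * y (L!i)))"
    by (rule sum.cong) (auto simp: dL)
  finally have e: "(\<Sum>j\<in>set L. of_rat (d j) * x * y j) = (\<Sum>i<?n. of_rat (c (Suc (Suc i))) * (x * y (L!i)))" .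
  have "of_rat (c 0) + of_rat (c 1) * x + (\<Sum>j\<in>set L. of_rat (d j) * x * y j) = 0"
    using s unfolding e
    apply (simp only: length_Cons length_map sum.lessThan_Suc_shift)
    apply (simp add: add.assoc)
    done
  from H[OF this] have "c 0 = 0" "c 1 = 0" "\<forall>j\<in>set L. d j = 0" by auto
  show "\<forall>i<length (1 # x # map (\<lambda>i. x * y i) L). c i = 0"
  proof (intro allI impI)
    fix i assume "i < length (1 # x # map (\<lambda>i. x * y i) L)"
    then consider "i = 0" | "i = 1" | j where "i = j + 2" "j < ?n"
    proof -
      assume a: "i = 0 \<Longrightarrow> thesis" "i = 1 \<Longrightarrow> thesis" "\<And>j. i = j + 2 \<Longrightarrow> j < ?n \<Longrightarrow> thesis"
      show thesis
      proof (cases "i \<ge> 2")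
        case True thus ?thesis using a(3)[of "i - 2"] \<open>i < _\<close> by simp
      next
        case False thus ?thesis using a(1,2) by linarith
      qed
    qed
    thus "c i = 0"
    proof cases
      case 3 thus ?thesis using dL[of j] \<open>\<forall>j\<in>set L. d j = 0\<close> by auto
    qed (use \<open>c 0 = 0\<close> \<open>c 1 = 0\<close> in auto)
  qed
qed

lemma sum_restr:
  fixes f :: "nat \<Rightarrow> real"
  assumes "S \<subseteq> {1..k}"
  shows "(\<Sum>j\<in>{1..k}. if j \<in> S then f j else 0) = (\<Sum>j\<in>S. f j)"
proof -
  have "{1..k} \<inter> S = S" using assms by auto
  thus ?thesis using sum.inter_restrict[of "{1..k}" f S] by simp
qed

lemma rel_T:
  fixes x :: real
  shows "(\<Sum>j\<in>S. of_rat (d j) * x * y j) = x * (\<Sum>j\<in>S. of_rat (d j) * y j)"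
  by (simp add: sum_distrib_left algebra_simps)

theorem lemma1:
  fixes x :: real and y :: "nat \<Rightarrow> real" and k :: nat
  assumes "x \<notin> \<rat>"
    and "Q_lin_indep (1 # map y [1..<k+1])"
  shows "\<exists>S \<subseteq> {1..k}. card S = k - 1 \<and>
           Q_lin_indep (1 # x # map (\<lambda>i. x * y i) (sorted_list_of_set S))"
proof -
  have H: "\<And>c0 c. of_rat c0 + (\<Sum>j\<in>{1..k}. of_rat (c j) * y j) = (0::real) \<Longrightarrow> c0 = 0 \<and> (\<forall>j\<in>{1..k}. c j = 0)"
    using hypA[OF assms(2)] by blast
  have x0: "x \<noteq> 0" using assms(1) by auto
  define Rep where "Rep \<beta> c \<longleftrightarrow> 1 / x = of_rat \<beta> + (\<Sum>j\<in>{1..k}. of_rat (c j) * y j)" for \<beta> c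
  have uniq: "c j = c' j" if "Rep \<beta> c" "Rep \<beta>' c'" "j \<in> {1..k}" for \<beta> \<beta>' c c' j
  proof -
    have "of_rat (\<beta> - \<beta>') + (\<Sum>j\<in>{1..k}. of_rat (c j - c' j) * y j) = (0::real)"
      using that(1,2) unfolding Rep_def
      by (simp add: of_rat_diff algebra_simps sum_subtractf)
    from H[OF this] that(3) show ?thesis by simp
  qed
  have good: "Q_lin_indep (1 # x # map (\<lambda>i. x * y i) (sorted_list_of_set S))"
    if S: "S \<subseteq> {1..k}" and nr: "\<not> (\<exists>\<beta> c. Rep \<beta> c \<and> (\<forall>j\<in>{1..k}-S. c j = 0))" for S
  proof -
    have fin: "finite S" using S finite_subset by blast
    show ?thesis
    proof (rule concl)
      show "distinct (sorted_list_of_set S)" by simp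
      fix a b d
      assume rel0: "of_rat a + of_rat b * x + (\<Sum>j\<in>set (sorted_list_of_set S). of_rat (d j) * x * y j) = (0::real)"
      define T where "T = (\<Sum>j\<in>S. of_rat (d j) * y j)"
      have rel: "of_rat a + x * (of_rat b + T) = 0"
      proof -
        have "of_rat a + of_rat b * x + x * T = 0"
          using rel0 fin rel_T[of d x y S] unfolding T_def by simp
        thus ?thesis by (simp add: algebra_simps)
      qed
      show "a = 0 \<and> b = 0 \<and> (\<forall>j\<in>set (sorted_list_of_set S). d j = 0)"
      proof (cases "a = 0")
        case True
        hence "of_rat b + T = 0" using rel x0 by simp
        hence "of_rat b + (\<Sum>j\<in>{1..k}. of_rat (if j \<in> S then d j else 0) * y j) = (0::real)"
        proof -
          have "(\<Sum>j\<in>{1..k}. of_rat (if j \<in> S then d j else 0) * y j) = (\<Sum>j\<in>{1..k}. if j \<in> S then of_rat (d j) * y j else (0::real))"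
            by (rule sum.cong) auto
          thus ?thesis using sum_restr[OF S, of "\<lambda>j. of_rat (d j) * y j"] \<open>of_rat b + T = 0\<close> unfolding T_def
            by simp
        qed
        from H[OF this] True fin S show ?thesis by (metis set_sorted_list_of_set subsetD)
      next
        case False
        have "1 / x = - (of_rat b + T) / of_rat a"
          using rel x0 False by (simp add: field_simps)
        also have "\<dots> = of_rat (- b / a) + (\<Sum>j\<in>S. of_rat (- d j / a) * y j)"
        proof -
          have "(\<Sum>j\<in>S. of_rat (- d j / a) * y j) = (\<Sum>j\<in>S. - (of_rat (d j) * y j) / of_rat a)"
            by (rule sum.cong) (auto simp: of_rat_divide of_rat_minus)
          also have "\<dots> = - T / of_rat a" unfolding T_def by (simp add: sum_divide_distrib[symmetric] sum_negf)
          finally show ?thesis using False by (simp add: of_rat_divide of_rat_minus field_simps)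
        qed
        also have "(\<Sum>j\<in>S. of_rat (- d j / a) * y j) = (\<Sum>j\<in>{1..k}. of_rat (if j \<in> S then - d j / a else 0) * y j)"
        proof -
          have "(\<Sum>j\<in>{1..k}. of_rat (if j \<in> S then - d j / a else 0) * y j) = (\<Sum>j\<in>{1..k}. if j \<in> S then of_rat (- d j / a) * y j else (0::real))"
            by (rule sum.cong) auto
          thus ?thesis using sum_restr[OF S, of "\<lambda>j. of_rat (- d j / a) * y j"] by simp
        qed
        finally have "Rep (- b / a) (\<lambda>j. if j \<in> S then - d j / a else 0)" unfolding Rep_def .
        hence "\<exists>\<beta> c. Rep \<beta> c \<and> (\<forall>j\<in>{1..k}-S. c j = 0)" by (intro exI[of _ "- b / a"] exI) auto
        with nr show ?thesis by blast
      qed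
    qed
  qed
  show ?thesis
  proof (cases "\<exists>\<beta> c m. Rep \<beta> c \<and> m \<in> {1..k} \<and> c m \<noteq> 0")
    case True
    then obtain \<beta> c m where r: "Rep \<beta> c" and m: "m \<in> {1..k}" and cm: "c m \<noteq> 0" by blast
    have "\<not> (\<exists>\<beta> c. Rep \<beta> c \<and> (\<forall>j\<in>{1..k}-({1..k}-{m}). c j = 0))"
    proof
      assume "\<exists>\<beta> c. Rep \<beta> c \<and> (\<forall>j\<in>{1..k}-({1..k}-{m}). c j = 0)"
      then obtain \<beta>' c' where "Rep \<beta>' c'" "\<forall>j\<in>{1..k}-({1..k}-{m}). c' j = 0" by blast
      moreover have "c m = c' m" using uniq[OF r \<open>Rep \<beta>' c'\<close> m] .
      ultimately show False using m cm by auto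
    qed
    from good[OF _ this] have "Q_lin_indep (1 # x # map (\<lambda>i. x * y i) (sorted_list_of_set ({1..k}-{m})))" by auto
    moreover have "card ({1..k}-{m}) = k - 1" using m by simp
    ultimately show ?thesis by (intro exI[of _ "{1..k}-{m}"]) auto
  next
    case False
    have "\<not> (\<exists>\<beta> c. Rep \<beta> c \<and> (\<forall>j\<in>{1..k}-{1..k-1}. c j = 0))"
    proof
      assume "\<exists>\<beta> c. Rep \<beta> c \<and> (\<forall>j\<in>{1..k}-{1..k-1}. c j = 0)"
      then obtain \<beta> c where r: "Rep \<beta> c" by blast
      have "\<forall>j\<in>{1..k}. c j = 0" using False r by blast
      hence "1 / x = of_rat \<beta>" using r unfolding Rep_def by simp
      hence "x = inverse (of_rat \<beta>)" by (metis inverse_eq_divide inverse_inverse_eq)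
      hence "x = of_rat (inverse \<beta>)" by (simp add: of_rat_inverse)
      thus False using assms(1) by (simp add: Rats_def)
    qed
    from good[OF _ this] have "Q_lin_indep (1 # x # map (\<lambda>i. x * y i) (sorted_list_of_set {1..k-1}))" by auto
    thus ?thesis by (intro exI[of _ "{1..k-1}"]) auto
  qed
qed

end
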